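(* Let $\mathbf{X}=(X_1,\dots,X_p)$ take values in $\{1,\dots,m\}^p$ and $Y$ take values in $\{0,1\}$, and let $\mathcal{C}\neq\emptyset$ be the class of joint distributions of $(\mathbf{X},Y)$ with prescribed pairwise marginals $\mathbb{P}(X_i=x_i,X_j=x_j)=\mu^{ij}_{x_ix_j}$ and $\mathbb{P}(X_i=x_i,Y=y)=\mu^i_{x_iy}$ for all $i,j$, $x_i,x_j$, $y$. Then $$\rho_m^{\mathrm{lb},\mathcal{C}}=\min_{\mathbb{P}_{\mathbf{X},Y}\in\mathcal{C}}\rho_m(\mathbf{X},Y)$$ if and only if there exists a distribution $\mathbb{P}\in\mathcal{C}$ and functions $f_i:\{1,\dots,m\}\to\mathbb{R}$, $i=1,\dots,p$, such that $\mathbb{E}_{\mathbb{P}}[Y\mid\mathbf{X}]=\sum_{i=1}^p f_i(X_i)$.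
   Context: The HGR maximal correlation under a joint law $\mathbb{P}$ is $\rho_m(\mathbf{X},Y)=\sup_{f,g}\mathbb{E}_{\mathbb{P}}[f(\mathbf{X})g(Y)]$ over all functions $f,g$ with $\mathbb{E}[f(\mathbf{X})]=\mathbb{E}[g(Y)]=0$, $\mathbb{E}[f^2(\mathbf{X})]=\mathbb{E}[g^2(Y)]=1$. The quantity $\rho_m^{\mathrm{lb}}(\mathbf{X},Y)$ is defined by the same maximization but with $f$ restricted to separable functions $f(\mathbf{X})=\sum_{i=1}^p\xi_i(X_i)$, $\xi_i:\{1,\dots,m\}\to\mathbb{R}$. This quantity depends only on the pairwise marginals, hence takes the same value for all $\mathbb{P}\in\mathcal{C}$; this common value is denoted $\rho_m^{\mathrm{lb},\mathcal{C}}$. Throughout, $0<\mathbb{P}(Y=1)<1$. *)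

theory Defs
  imports Main "HOL-Library.FuncSet" Complex_Main
begin

text \<open>Sample space of X = (X_1,...,X_p): vectors indexed by i < p with values in {1..m}.
  Y takes values 0 or 1 (as naturals). A joint law P is a function P x y (mass of (X,Y)=(x,y)).\<close>

definition Xsp :: "nat \<Rightarrow> nat \<Rightarrow> (nat \<Rightarrow> nat) set" where
  "Xsp p m = PiE {..<p} (\<lambda>_. {1..m})"

definition expect :: "nat \<Rightarrow> nat \<Rightarrow> ((nat \<Rightarrow> nat) \<Rightarrow> nat \<Rightarrow> real)
    \<Rightarrow> ((nat \<Rightarrow> nat) \<Rightarrow> nat \<Rightarrow> real) \<Rightarrow> real" where
  "expect p m P h = (\<Sum>x\<in>Xsp p m. \<Sum>y\<in>{0,1}. P x y * h x y)"

definition is_dist :: "nat \<Rightarrow> nat \<Rightarrow> ((nat \<Rightarrow> nat) \<Rightarrow> nat \<Rightarrow> real) \<Rightarrow> bool" where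
  "is_dist p m P \<longleftrightarrow> (\<forall>x\<in>Xsp p m. \<forall>y\<in>{0,1}. 0 \<le> P x y) \<and> expect p m P (\<lambda>_ _. 1) = 1"

definition classC :: "nat \<Rightarrow> nat \<Rightarrow> (nat \<Rightarrow> nat \<Rightarrow> nat \<Rightarrow> nat \<Rightarrow> real)
    \<Rightarrow> (nat \<Rightarrow> nat \<Rightarrow> nat \<Rightarrow> real) \<Rightarrow> ((nat \<Rightarrow> nat) \<Rightarrow> nat \<Rightarrow> real) set" where
  "classC p m mu2 mu1 = {P. is_dist p m P \<and>
     (\<forall>i<p. \<forall>j<p. \<forall>a\<in>{1..m}. \<forall>b\<in>{1..m}.
        expect p m P (\<lambda>x y. if x i = a \<and> x j = b then 1 else 0) = mu2 i j a b) \<and>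
     (\<forall>i<p. \<forall>a\<in>{1..m}. \<forall>y\<in>{0,1}.
        expect p m P (\<lambda>x y'. if x i = a \<and> y' = y then 1 else 0) = mu1 i a y)}"

definition hgr_feasible :: "nat \<Rightarrow> nat \<Rightarrow> ((nat \<Rightarrow> nat) \<Rightarrow> nat \<Rightarrow> real)
    \<Rightarrow> ((nat \<Rightarrow> nat) \<Rightarrow> real) \<Rightarrow> (nat \<Rightarrow> real) \<Rightarrow> bool" where
  "hgr_feasible p m P f g \<longleftrightarrow>
     expect p m P (\<lambda>x y. f x) = 0 \<and> expect p m P (\<lambda>x y. g y) = 0 \<and>
     expect p m P (\<lambda>x y. (f x)\<^sup>2) = 1 \<and> expect p m P (\<lambda>x y. (g y)\<^sup>2) = 1"

definition rho_m :: "nat \<Rightarrow> nat \<Rightarrow> ((nat \<Rightarrow> nat) \<Rightarrow> nat \<Rightarrow> real) \<Rightarrow> real" where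
  "rho_m p m P = Sup {expect p m P (\<lambda>x y. f x * g y) | f g. hgr_feasible p m P f g}"

definition separable :: "nat \<Rightarrow> nat \<Rightarrow> ((nat \<Rightarrow> nat) \<Rightarrow> real) \<Rightarrow> bool" where
  "separable p m f \<longleftrightarrow> (\<exists>\<xi>::nat \<Rightarrow> nat \<Rightarrow> real. \<forall>x\<in>Xsp p m. f x = (\<Sum>i<p. \<xi> i (x i)))"

definition rho_lb :: "nat \<Rightarrow> nat \<Rightarrow> ((nat \<Rightarrow> nat) \<Rightarrow> nat \<Rightarrow> real) \<Rightarrow> real" where
  "rho_lb p m P = Sup {expect p m P (\<lambda>x y. f x * g y) | f g.
       hgr_feasible p m P f g \<and> separable p m f}"

text \<open>Common value of rho_lb over the class C.\<close>
definition rho_lb_C :: "nat \<Rightarrow> nat \<Rightarrow> (nat \<Rightarrow> nat \<Rightarrow> nat \<Rightarrow> nat \<Rightarrow> real)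
    \<Rightarrow> (nat \<Rightarrow> nat \<Rightarrow> nat \<Rightarrow> real) \<Rightarrow> real" where
  "rho_lb_C p m mu2 mu1 = rho_lb p m (SOME P. P \<in> classC p m mu2 mu1)"

end

theory Submission imports Defs "HOL-Analysis.Analysis"
begin

definition ip :: "'a set \<Rightarrow> ('a \<Rightarrow> real) \<Rightarrow> ('a \<Rightarrow> real) \<Rightarrow> ('a \<Rightarrow> real) \<Rightarrow> real" where
  "ip S w a b = (\<Sum>x\<in>S. w x * a x * b x)"

lemma ip_sym: "ip S w a b = ip S w b a"
  unfolding ip_def by (simp add: mult_ac)

lemma ip_diff: "ip S w (\<lambda>x. a x - b x) c = ip S w a c - ip S w b c"
  unfolding ip_def by (simp add: algebra_simps sum_subtractf)

lemma ip_add: "ip S w (\<lambda>x. a x + b x) c = ip S w a c + ip S w b c"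
  unfolding ip_def by (simp add: algebra_simps sum.distrib)

lemma ip_scale: "ip S w (\<lambda>x. t * a x) c = t * ip S w a c"
  unfolding ip_def by (simp add: algebra_simps sum_distrib_left)

lemma ip_sum: "ip S w (\<lambda>x. \<Sum>j\<in>J. c j * v j x) b = (\<Sum>j\<in>J. c j * ip S w (v j) b)"
  unfolding ip_def by (simp add: sum_distrib_left sum_distrib_right mult_ac sum.swap[of _ S])

lemma ip_cong: "(\<And>x. x \<in> S \<Longrightarrow> a x = a' x) \<Longrightarrow> (\<And>x. x \<in> S \<Longrightarrow> b x = b' x) \<Longrightarrow>
   ip S w a b = ip S w a' b'"
  unfolding ip_def by (rule sum.cong) auto

lemma ip_nonneg: "(\<And>x. x \<in> S \<Longrightarrow> w x \<ge> 0) \<Longrightarrow> ip S w a a \<ge> 0"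
  unfolding ip_def by (rule sum_nonneg) (simp add: mult.assoc)

lemma ip_CS:
  assumes "\<And>x. x \<in> S \<Longrightarrow> w x \<ge> 0"
  shows "(ip S w a b)\<^sup>2 \<le> ip S w a a * ip S w b b"
proof -
  have sq: "sqrt (w x) * sqrt (w x) = w x" if "x \<in> S" for x using assms[OF that] by simp
  have e: "ip S w c d = (\<Sum>x\<in>S. (sqrt (w x) * c x) * (sqrt (w x) * d x))" for c d
    unfolding ip_def
  proof (rule sum.cong)
    fix x assume "x \<in> S"
    have "sqrt (w x) * c x * (sqrt (w x) * d x) = (sqrt (w x) * sqrt (w x)) * c x * d x" by (simp only: mult_ac)
    then show "w x * c x * d x = sqrt (w x) * c x * (sqrt (w x) * d x)" using sq[OF \<open>x \<in> S\<close>] by simp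
  qed simp
  have "(\<Sum>x\<in>S. (sqrt (w x) * a x) * (sqrt (w x) * b x))\<^sup>2
     \<le> (\<Sum>x\<in>S. (sqrt (w x) * a x)\<^sup>2) * (\<Sum>x\<in>S. (sqrt (w x) * b x)\<^sup>2)"
    by (rule Cauchy_Schwarz_ineq_sum)
  then show ?thesis unfolding e[of a b] e[of a a] e[of b b] by (simp only: power2_eq_square)
qed

lemma ip_CS_abs:
  assumes "\<And>x. x \<in> S \<Longrightarrow> w x \<ge> 0"
  shows "\<bar>ip S w a b\<bar> \<le> sqrt (ip S w a a) * sqrt (ip S w b b)"
proof -
  have "sqrt ((ip S w a b)\<^sup>2) \<le> sqrt (ip S w a a * ip S w b b)"
    by (rule real_sqrt_le_mono) (rule ip_CS[where S=S and w=w and a=a and b=b, OF assms])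
  thus ?thesis by (simp add: real_sqrt_mult)
qed

lemma ip_zero_left:
  fixes S :: "'a set" and a u w :: "'a \<Rightarrow> real"
  assumes "\<And>x. x \<in> S \<Longrightarrow> w x \<ge> 0" "ip S w u u = 0"
  shows "ip S w a u = 0"
proof -
  have "(ip S w a u)\<^sup>2 \<le> ip S w a a * ip S w u u" by (rule ip_CS[where S=S and w=w and a=a and b=u, OF assms(1)])
  then show ?thesis using assms(2) by simp
qed

lemma proj:
  assumes w: "\<And>x. x \<in> S \<Longrightarrow> w x \<ge> 0" and J: "finite J"
  shows "\<exists>c. \<forall>j\<in>J. ip S w (\<lambda>x. r x - (\<Sum>i\<in>J. c i * v i x)) (v j) = 0"
  using J
proof (induction J arbitrary: r rule: finite_induct)
  case empty
  then show ?case by simp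
next
  case (insert j0 F)
  obtain c1 where c1: "\<forall>j\<in>F. ip S w (\<lambda>x. r x - (\<Sum>i\<in>F. c1 i * v i x)) (v j) = 0"
    using insert.IH by blast
  obtain d where d: "\<forall>j\<in>F. ip S w (\<lambda>x. v j0 x - (\<Sum>i\<in>F. d i * v i x)) (v j) = 0"
    using insert.IH by blast
  define s1 where "s1 = (\<lambda>x. \<Sum>i\<in>F. c1 i * v i x)"
  define t where "t = (\<lambda>x. \<Sum>i\<in>F. d i * v i x)"
  define u where "u = (\<lambda>x. v j0 x - t x)"
  have ut: "\<forall>j\<in>F. ip S w u (v j) = 0" using d unfolding u_def t_def by simp
  have rs1: "\<forall>j\<in>F. ip S w (\<lambda>x. r x - s1 x) (v j) = 0" using c1 unfolding s1_def by simp
  have rs1t: "ip S w (\<lambda>x. r x - s1 x) t = 0"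
    unfolding t_def using rs1 by (subst ip_sym, subst ip_sum) (simp add: ip_sym)
  have vj0: "v j0 = (\<lambda>x. u x + t x)" unfolding u_def by auto
  show ?case
  proof (cases "ip S w u u = 0")
    case True
    define c where "c = c1(j0 := 0)"
    have sc: "(\<lambda>x. \<Sum>i\<in>insert j0 F. c i * v i x) = s1"
      unfolding s1_def c_def using insert.hyps
      by (auto intro!: sum.cong simp: sum.insert)
    have "ip S w (\<lambda>x. r x - s1 x) (v j0) = 0"
      using ip_zero_left[OF w True, of "\<lambda>x. r x - s1 x"] rs1t
      by (simp add: vj0 ip_sym[of S w _ "\<lambda>x. u x + t x"] ip_add ip_sym[of S w "\<lambda>x. r x - s1 x"] )
    then show ?thesis using rs1 by (intro exI[of _ c]) (simp only: fun_cong[OF sc], auto)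
  next
    case False
    define \<alpha> where "\<alpha> = ip S w (\<lambda>x. r x - s1 x) u / ip S w u u"
    define c where "c = (\<lambda>i. if i = j0 then \<alpha> else c1 i - \<alpha> * d i)"
    have sc: "(\<lambda>x. \<Sum>i\<in>insert j0 F. c i * v i x) = (\<lambda>x. s1 x + \<alpha> * u x)"
    proof
      fix x
      have "(\<Sum>i\<in>insert j0 F. c i * v i x) = \<alpha> * v j0 x + (\<Sum>i\<in>F. (c1 i - \<alpha> * d i) * v i x)"
        using insert.hyps unfolding c_def by (auto intro!: sum.cong)
      also have "\<dots> = s1 x + \<alpha> * u x"
        unfolding s1_def u_def t_def by (simp add: algebra_simps sum_subtractf sum_distrib_left)
      finally show "(\<Sum>i\<in>insert j0 F. c i * v i x) = s1 x + \<alpha> * u x" .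
    qed
    have e: "(\<lambda>x. r x - (s1 x + \<alpha> * u x)) = (\<lambda>x. (r x - s1 x) - \<alpha> * u x)" by auto
    have F0: "\<forall>j\<in>F. ip S w (\<lambda>x. (r x - s1 x) - \<alpha> * u x) (v j) = 0"
      using rs1 ut by (simp add: ip_diff ip_scale)
    have t0: "ip S w (\<lambda>x. (r x - s1 x) - \<alpha> * u x) t = 0"
      unfolding t_def using F0 by (subst ip_sym, subst ip_sum) (simp add: ip_sym)
    have u0: "ip S w (\<lambda>x. (r x - s1 x) - \<alpha> * u x) u = 0"
    proof -
      have "ip S w (\<lambda>x. (r x - s1 x) - \<alpha> * u x) u = ip S w (\<lambda>x. r x - s1 x) u - \<alpha> * ip S w u u"
        by (simp only: ip_diff ip_scale)
      also have "\<dots> = 0" using False unfolding \<alpha>_def by simp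
      finally show ?thesis .
    qed
    have "ip S w (\<lambda>x. (r x - s1 x) - \<alpha> * u x) (v j0) = 0"
      using t0 u0
      by (simp add: vj0 ip_sym[of S w _ "\<lambda>x. u x + t x"] ip_add ip_sym[of S w "\<lambda>x. (r x - s1 x) - \<alpha> * u x"])
    then show ?thesis using F0 by (intro exI[of _ c]) (simp only: fun_cong[OF sc] e, auto)
  qed
qed


lemma ip_cong_w: "(\<And>x. x \<in> S \<Longrightarrow> w x \<noteq> 0 \<Longrightarrow> a x = a' x) \<Longrightarrow> (\<And>x. x \<in> S \<Longrightarrow> w x \<noteq> 0 \<Longrightarrow> b x = b' x) \<Longrightarrow>
   ip S w a b = ip S w a' b'"
  unfolding ip_def
proof (rule sum.cong)
  fix x assume "x \<in> S"
  moreover assume "\<And>x. x \<in> S \<Longrightarrow> w x \<noteq> 0 \<Longrightarrow> a x = a' x" "\<And>x. x \<in> S \<Longrightarrow> w x \<noteq> 0 \<Longrightarrow> b x = b' x"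
  ultimately show "w x * a x * b x = w x * a' x * b' x" by (cases "w x = 0") auto
qed simp

lemma finite_Xsp: "finite (Xsp p m)"
  unfolding Xsp_def by (simp add: finite_PiE)

lemma expect_cong: "(\<And>x y. x \<in> Xsp p m \<Longrightarrow> y \<in> {0,1} \<Longrightarrow> F x y = G x y) \<Longrightarrow> expect p m P F = expect p m P G"
  unfolding expect_def by (intro sum.cong) auto

lemma expect_sum: "expect p m P (\<lambda>x y. \<Sum>k\<in>K. F k x y) = (\<Sum>k\<in>K. expect p m P (\<lambda>x y. F k x y))"
proof -
  have "expect p m P (\<lambda>x y. \<Sum>k\<in>K. F k x y) = (\<Sum>x\<in>Xsp p m. \<Sum>y\<in>{0,1}. \<Sum>k\<in>K. P x y * F k x y)"
    unfolding expect_def by (simp only: sum_distrib_left)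
  also have "\<dots> = (\<Sum>x\<in>Xsp p m. \<Sum>k\<in>K. \<Sum>y\<in>{0,1}. P x y * F k x y)"
    by (rule sum.cong[OF refl], rule sum.swap)
  also have "\<dots> = (\<Sum>k\<in>K. \<Sum>x\<in>Xsp p m. \<Sum>y\<in>{0,1}. P x y * F k x y)"
    by (rule sum.swap)
  finally show ?thesis unfolding expect_def .
qed

lemma expect_scale: "expect p m P (\<lambda>x y. c * F x y) = c * expect p m P F"
  unfolding expect_def by (simp add: sum_distrib_left mult.left_commute distrib_left)

lemma expect_eq: "expect p m P H = (\<Sum>x\<in>Xsp p m. P x 0 * H x 0 + P x 1 * H x 1)"
  unfolding expect_def by simp

lemma Xsp_mem: "x \<in> Xsp p m \<Longrightarrow> i < p \<Longrightarrow> x i \<in> {1..m}"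
  unfolding Xsp_def by (simp add: PiE_iff)

locale pd =
  fixes p m :: nat and P :: "(nat \<Rightarrow> nat) \<Rightarrow> nat \<Rightarrow> real"
  assumes dist: "is_dist p m P" and p1: "1 \<le> p"
    and pipos: "0 < expect p m P (\<lambda>x y. if y = 1 then 1 else 0)"
    and pilt: "expect p m P (\<lambda>x y. if y = 1 then 1 else 0) < 1"
begin

abbreviation "S \<equiv> Xsp p m"
definition q where "q x = P x 0 + P x 1"
definition pi where "pi = (\<Sum>x\<in>S. P x 1)"
definition r where "r x = (if q x = 0 then 0 else P x 1 / q x - pi)"
definition kk where "kk = 1 / sqrt (pi * (1 - pi))"
abbreviation "one \<equiv> (\<lambda>_::nat\<Rightarrow>nat. 1::real)"

lemma nn0: "x \<in> S \<Longrightarrow> 0 \<le> P x 0" using dist unfolding is_dist_def by auto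
lemma nn1: "x \<in> S \<Longrightarrow> 0 \<le> P x 1" using dist unfolding is_dist_def by auto
lemma q_nn: "x \<in> S \<Longrightarrow> 0 \<le> q x" using nn0 nn1 unfolding q_def by (simp add: add_nonneg_nonneg)

lemma sumq: "(\<Sum>x\<in>S. q x) = 1"
  using dist unfolding is_dist_def expect_eq q_def by simp

lemma pi_eq: "expect p m P (\<lambda>x y. if y = 1 then 1 else 0) = pi"
  unfolding expect_eq pi_def by simp

lemma pi_pos: "0 < pi" and pi_lt: "pi < 1" using pipos pilt pi_eq by auto

lemma sumP0: "(\<Sum>x\<in>S. P x 0) = 1 - pi"
  using sumq unfolding q_def pi_def by (simp add: sum.distrib)

lemma ex_F: "expect p m P (\<lambda>x y. F x) = ip S q F one"
  unfolding expect_eq ip_def q_def by (simp add: algebra_simps)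

lemma ex_F2: "expect p m P (\<lambda>x y. (F x)\<^sup>2) = ip S q F F"
  unfolding expect_eq ip_def q_def by (simp add: algebra_simps power2_eq_square)

lemma ex_G: "expect p m P (\<lambda>x y. G y) = G 0 * (1 - pi) + G 1 * pi"
proof -
  have "expect p m P (\<lambda>x y. G y) = G 0 * (\<Sum>x\<in>S. P x 0) + G 1 * (\<Sum>x\<in>S. P x 1)"
    unfolding expect_eq by (simp add: sum.distrib sum_distrib_left mult_ac)
  then show ?thesis using sumP0 unfolding pi_def by simp
qed

lemma ex_G2: "expect p m P (\<lambda>x y. (G y)\<^sup>2) = (G 0)\<^sup>2 * (1 - pi) + (G 1)\<^sup>2 * pi"
  using ex_G[of "\<lambda>y. (G y)\<^sup>2"] by simp

lemma P1_eq: "x \<in> S \<Longrightarrow> P x 1 = q x * (r x + pi)"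
proof -
  assume x: "x \<in> S"
  show ?thesis
  proof (cases "q x = 0")
    case True
    then have "P x 1 = 0" using nn0[OF x] nn1[OF x] unfolding q_def by linarith
    then show ?thesis using True by simp
  qed (simp add: r_def field_simps)
qed

lemma ex_FG: "expect p m P (\<lambda>x y. F x * G y) =
   G 0 * ip S q F one + (G 1 - G 0) * (ip S q F r + pi * ip S q F one)"
proof -
  have "expect p m P (\<lambda>x y. F x * G y) = (\<Sum>x\<in>S. G 0 * (q x * F x) + (G 1 - G 0) * (q x * F x * r x + pi * (q x * F x)))"
    unfolding expect_eq
  proof (rule sum.cong)
    fix x assume x: "x \<in> S"
    have e: "P x 1 = q x * (r x + pi)" by (rule P1_eq[OF x])
    have "(G 1 - G 0) * (q x * F x * r x + pi * (q x * F x)) = (G 1 - G 0) * F x * (q x * (r x + pi))"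
      by (simp add: algebra_simps)
    also have "\<dots> = (G 1 - G 0) * F x * P x 1" using e by simp
    finally show "P x 0 * (F x * G 0) + P x 1 * (F x * G 1) = G 0 * (q x * F x) + (G 1 - G 0) * (q x * F x * r x + pi * (q x * F x))"
      by (simp add: q_def algebra_simps)
  qed simp
  also have "\<dots> = G 0 * ip S q F one + (G 1 - G 0) * (ip S q F r + pi * ip S q F one)"
    unfolding ip_def by (simp add: ring_distribs sum.distrib sum_distrib_left mult_ac)
  finally show ?thesis .
qed

lemma r_mean: "ip S q r one = 0"
proof -
  have "ip S q r one = (\<Sum>x\<in>S. P x 1 - pi * q x)"
    unfolding ip_def
  proof (rule sum.cong)
    fix x assume x: "x \<in> S"
    have e: "P x 1 = q x * (r x + pi)" by (rule P1_eq[OF x])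
    show "q x * r x * 1 = P x 1 - pi * q x" using e by (simp add: algebra_simps)
  qed simp
  also have "\<dots> = 0" using sumq by (simp add: sum_subtractf sum_distrib_left[symmetric] pi_def)
  finally show ?thesis .
qed

lemma qnn: "\<And>x. x \<in> S \<Longrightarrow> 0 \<le> q x" using q_nn .

lemma kk_sq: "kk\<^sup>2 = 1 / (pi * (1 - pi))" and kk_pos: "kk > 0"
  using pi_pos pi_lt unfolding kk_def by (auto simp: power_divide)

lemma V1:
  assumes "hgr_feasible p m P f g"
  shows "expect p m P (\<lambda>x y. f x * g y) \<le> kk * \<bar>ip S q f r\<bar>"
    and "ip S q f one = 0" and "ip S q f f = 1"
proof -
  show f1: "ip S q f one = 0" and "ip S q f f = 1"
    using assms unfolding hgr_feasible_def ex_F2 ex_G2 ex_F ex_G by auto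
  have g1: "g 0 * (1 - pi) + g 1 * pi = 0" and g2: "(g 0)\<^sup>2 * (1 - pi) + (g 1)\<^sup>2 * pi = 1"
    using assms unfolding hgr_feasible_def ex_F2 ex_G2 ex_F ex_G by auto
  have "pi * (1 - pi) * (g 1 - g 0)\<^sup>2 = ((g 0)\<^sup>2 * (1 - pi) + (g 1)\<^sup>2 * pi) * ((1 - pi) + pi) - (g 0 * (1 - pi) + g 1 * pi)\<^sup>2"
    by (simp add: algebra_simps power2_eq_square)
  also have "\<dots> = 1" using g1 g2 by simp
  finally have h: "pi * (1 - pi) * (g 1 - g 0)\<^sup>2 = 1" .
  have "(g 1 - g 0)\<^sup>2 = 1 / (pi * (1 - pi))" using h pi_pos pi_lt by (simp add: eq_divide_eq mult_ac)
  then have "(g 1 - g 0)\<^sup>2 = kk\<^sup>2" using kk_sq by simp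
  then have ab: "\<bar>g 1 - g 0\<bar> = kk" using kk_pos by (metis abs_of_pos power2_abs power2_eq_iff_nonneg abs_ge_zero less_imp_le)
  have "expect p m P (\<lambda>x y. f x * g y) = (g 1 - g 0) * ip S q f r"
    by (simp add: ex_FG f1)
  also have "\<dots> \<le> \<bar>g 1 - g 0\<bar> * \<bar>ip S q f r\<bar>" by (simp add: abs_mult[symmetric])
  finally show "expect p m P (\<lambda>x y. f x * g y) \<le> kk * \<bar>ip S q f r\<bar>" using ab by simp
qed

definition gs where "gs y = kk * (if y = (1::nat) then 1 - pi else - pi)"

lemma V2:
  assumes "ip S q f one = 0" "ip S q f f = 1"
  shows "hgr_feasible p m P f gs" and "expect p m P (\<lambda>x y. f x * gs y) = kk * ip S q f r"
proof -
  have "(gs 0)\<^sup>2 * (1 - pi) + (gs 1)\<^sup>2 * pi = kk\<^sup>2 * (pi * (1 - pi))"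
    unfolding gs_def by (simp add: algebra_simps power2_eq_square)
  also have "\<dots> = 1" using kk_sq pi_pos pi_lt by simp
  finally have e2: "(gs 0)\<^sup>2 * (1 - pi) + (gs 1)\<^sup>2 * pi = 1" .
  have e1: "gs 0 * (1 - pi) + gs 1 * pi = 0" unfolding gs_def by (simp add: algebra_simps)
  show "hgr_feasible p m P f gs"
    using assms e1 e2 unfolding hgr_feasible_def ex_F2 ex_G2 ex_F ex_G by simp
  show "expect p m P (\<lambda>x y. f x * gs y) = kk * ip S q f r"
    using assms by (simp add: ex_FG gs_def algebra_simps)
qed

lemma bound:
  assumes "hgr_feasible p m P f g"
  shows "expect p m P (\<lambda>x y. f x * g y) \<le> kk * sqrt (ip S q r r)"
proof -
  have "\<bar>ip S q f r\<bar> \<le> sqrt (ip S q f f) * sqrt (ip S q r r)" by (rule ip_CS_abs) (rule qnn)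
  then have "\<bar>ip S q f r\<bar> \<le> sqrt (ip S q r r)" using V1(3)[OF assms] by simp
  then show ?thesis using V1(1)[OF assms] kk_pos by (meson mult_left_mono less_imp_le order_trans)
qed


definition Full where "Full = {expect p m P (\<lambda>x y. f x * g y) | f g. hgr_feasible p m P f g}"
definition Sep where "Sep = {expect p m P (\<lambda>x y. f x * g y) | f g. hgr_feasible p m P f g \<and> separable p m f}"

lemma rho_m_eq: "rho_m p m P = Sup Full" unfolding rho_m_def Full_def ..
lemma rho_lb_eq: "rho_lb p m P = Sup Sep" unfolding rho_lb_def Sep_def ..

lemma Sep_sub: "Sep \<subseteq> Full" unfolding Sep_def Full_def by blast

lemma bdd_Full: "bdd_above Full"
  unfolding Full_def by (rule bdd_aboveI[where M="kk * sqrt (ip S q r r)"]) (auto intro: bound)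

lemma bdd_Sep: "bdd_above Sep" by (rule bdd_above_mono[OF bdd_Full Sep_sub])

lemma sum_single:
  assumes "x0 \<in> S" "\<And>x. x \<in> S \<Longrightarrow> x \<noteq> x0 \<Longrightarrow> q x = 0"
  shows "(\<Sum>x\<in>S. q x * a x * b x) = q x0 * a x0 * b x0"
proof -
  have "(\<Sum>x\<in>S. q x * a x * b x) = q x0 * a x0 * b x0 + (\<Sum>x\<in>S - {x0}. q x * a x * b x)"
    using assms(1) finite_Xsp by (simp add: sum.remove)
  also have "(\<Sum>x\<in>S - {x0}. q x * a x * b x) = 0" using assms(2) by (intro sum.neutral) auto
  finally show ?thesis by simp
qed

lemma ip_one_one: "ip S q one one = 1" using sumq unfolding ip_def by simp

lemma Sep_ne: assumes "Full \<noteq> {}" shows "Sep \<noteq> {}"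
proof -
  obtain f g where fg: "hgr_feasible p m P f g" using assms unfolding Full_def by blast
  have f1: "ip S q f one = 0" and f2: "ip S q f f = 1" using V1[OF fg] by auto
  have "\<exists>x\<in>S. \<exists>x'\<in>S. q x \<noteq> 0 \<and> q x' \<noteq> 0 \<and> x \<noteq> x'"
  proof (rule ccontr)
    assume nn: "\<not> ?thesis"
    have "\<exists>x0\<in>S. q x0 \<noteq> 0"
    proof (rule ccontr)
      assume "\<not> ?thesis"
      then have "(\<Sum>x\<in>S. q x) = 0" by simp
      then show False using sumq by simp
    qed
    then obtain x0 where x0: "x0 \<in> S" "q x0 \<noteq> 0" by blast
    have z: "\<And>x. x \<in> S \<Longrightarrow> x \<noteq> x0 \<Longrightarrow> q x = 0" using nn x0 by blast
    have "q x0 * 1 * 1 = 1" using sum_single[OF x0(1) z, of one one] sumq by simp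
    moreover have "q x0 * f x0 * 1 = 0" using sum_single[OF x0(1) z, of f one] f1 unfolding ip_def by simp
    moreover have "q x0 * f x0 * f x0 = 1" using sum_single[OF x0(1) z, of f f] f2 unfolding ip_def by simp
    ultimately show False by simp
  qed
  then obtain x x' where xx: "x \<in> S" "x' \<in> S" "q x \<noteq> 0" "q x' \<noteq> 0" "x \<noteq> x'" by blast
  obtain i where i: "i < p" "x i \<noteq> x' i"
  proof (rule ccontr)
    assume "\<not> thesis"
    then have "\<And>i. i \<in> {..<p} \<Longrightarrow> x i = x' i" using that by blast
    then have "x = x'" using xx(1,2) unfolding Xsp_def by (rule PiE_ext[rotated 2]) auto
    then show False using xx by simp
  qed
  define v where "v = (\<lambda>y::nat\<Rightarrow>nat. if y i = x i then 1 else (0::real))"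
  define \<mu> where "\<mu> = ip S q v one"
  define d where "d = (\<lambda>y. v y - \<mu>)"
  define var where "var = ip S q d d"
  have qx: "q x > 0" "q x' > 0" using xx q_nn by (auto simp: order_le_less)
  have "var \<ge> (\<Sum>y\<in>{x,x'}. q y * d y * d y)"
    unfolding var_def ip_def using xx finite_Xsp
    by (intro sum_mono2) (auto simp: q_nn mult.assoc)
  also have "(\<Sum>y\<in>{x,x'}. q y * d y * d y) = q x * (1 - \<mu>)\<^sup>2 + q x' * \<mu>\<^sup>2"
    using xx i unfolding d_def v_def by (simp add: power2_eq_square)
  finally have vge: "var \<ge> q x * (1 - \<mu>)\<^sup>2 + q x' * \<mu>\<^sup>2" .
  have "q x * (1 - \<mu>)\<^sup>2 + q x' * \<mu>\<^sup>2 > 0"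
  proof (cases "\<mu> = 0")
    case True then show ?thesis using qx by simp
  next
    case False then show ?thesis using qx by (intro add_nonneg_pos) auto
  qed
  then have vpos: "var > 0" using vge by linarith
  have d1a: "ip S q d one = (\<Sum>x\<in>S. q x * v x) - \<mu> * (\<Sum>x\<in>S. q x)"
    unfolding d_def ip_def by (simp add: algebra_simps sum_subtractf sum_distrib_left)
  have d1b: "\<mu> = (\<Sum>x\<in>S. q x * v x)" unfolding \<mu>_def ip_def by simp
  have d1: "ip S q d one = 0" using d1a d1b sumq by simp
  define fs where "fs = (\<lambda>y. (1 / sqrt var) * d y)"
  have fs1: "ip S q fs one = 0" unfolding fs_def by (simp only: ip_scale d1)
  have "ip S q fs fs = (1 / sqrt var) * ((1 / sqrt var) * var)"
  proof -
    have sy: "ip S q d (\<lambda>y. (1 / sqrt var) * d y) = ip S q (\<lambda>y. (1 / sqrt var) * d y) d" by (rule ip_sym)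
    show ?thesis unfolding fs_def by (simp only: ip_scale sy var_def[symmetric])
  qed
  then have fs2: "ip S q fs fs = 1" using vpos by simp
  have sep: "separable p m fs"
    unfolding separable_def
  proof (intro exI[of _ "\<lambda>j b. if j = i then (1 / sqrt var) * ((if b = x i then 1 else 0) - \<mu>) else 0"] ballI)
    fix y assume "y \<in> S"
    show "fs y = (\<Sum>j<p. if j = i then (1 / sqrt var) * ((if y j = x i then 1 else 0) - \<mu>) else 0)"
      using i unfolding fs_def d_def v_def by simp
  qed
  show ?thesis using V2[OF fs1 fs2] sep unfolding Sep_def by blast
qed

lemma L1: "rho_lb p m P \<le> rho_m p m P"
  unfolding rho_m_eq rho_lb_eq
proof (cases "Sep = {}")
  case True
  then have "Full = {}" using Sep_ne by blast
  then show "Sup Sep \<le> Sup Full" using True by simp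
next
  case False
  then show "Sup Sep \<le> Sup Full" by (rule cSup_subset_mono[OF _ bdd_Full Sep_sub])
qed


definition vv :: "nat \<times> nat \<Rightarrow> (nat \<Rightarrow> nat) \<Rightarrow> real" where
  "vv j y = (if y (fst j) = snd j then 1 else 0)"

abbreviation "JJ \<equiv> {..<p} \<times> {1..m}"

lemma vv_sum:
  assumes "y \<in> S"
  shows "(\<Sum>j\<in>JJ. c j * vv j y) = (\<Sum>i<p. c (i, y i))"
proof -
  have "(\<Sum>j\<in>JJ. c j * vv j y) = (\<Sum>i<p. \<Sum>a\<in>{1..m}. c (i, a) * vv (i, a) y)"
    by (simp add: sum.cartesian_product)
  also have "\<dots> = (\<Sum>i<p. c (i, y i))"
  proof (rule sum.cong)
    fix i assume "i \<in> {..<p}"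
    then have "y i \<in> {1..m}" using Xsp_mem assms by auto
    then show "(\<Sum>a\<in>{1..m}. c (i, a) * vv (i, a) y) = c (i, y i)"
      unfolding vv_def by (simp add: if_distrib[of "\<lambda>t. c _ * t"] cong: if_cong)
  qed simp
  finally show ?thesis .
qed

lemma sep_span:
  assumes "separable p m f"
  obtains c where "\<And>y. y \<in> S \<Longrightarrow> f y = (\<Sum>j\<in>JJ. c j * vv j y)"
proof -
  obtain \<xi> where xi: "\<forall>x\<in>S. f x = (\<Sum>i<p. \<xi> i (x i))" using assms unfolding separable_def by blast
  show ?thesis
  proof (rule that[of "case_prod \<xi>"])
    fix y assume y: "y \<in> S"
    then have "f y = (\<Sum>i<p. \<xi> i (y i))" using xi by blast
    also have "\<dots> = (\<Sum>i<p. (case_prod \<xi>) (i, y i))" by simp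
    also have "\<dots> = (\<Sum>j\<in>JJ. (case_prod \<xi>) j * vv j y)" by (rule vv_sum[symmetric]) (rule y)
    finally show "f y = (\<Sum>j\<in>JJ. (case_prod \<xi>) j * vv j y)" .
  qed
qed

lemma perp_sep:
  assumes "\<forall>j\<in>JJ. ip S q e (vv j) = 0" "separable p m f"
  shows "ip S q e f = 0"
proof -
  obtain c where c: "\<And>y. y \<in> S \<Longrightarrow> f y = (\<Sum>j\<in>JJ. c j * vv j y)" using sep_span[OF assms(2)] by blast
  have "ip S q e f = ip S q (\<lambda>y. \<Sum>j\<in>JJ. c j * vv j y) e"
    by (subst ip_sym) (rule ip_cong, auto simp: c)
  also have "\<dots> = (\<Sum>j\<in>JJ. c j * ip S q (vv j) e)" by (rule ip_sum)
  also have "\<dots> = 0"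
  proof (intro sum.neutral ballI)
    fix j assume "j \<in> JJ"
    then have "ip S q e (vv j) = 0" using assms(1) by blast
    then show "c j * ip S q (vv j) e = 0" using ip_sym[of S q "vv j" e] by simp
  qed
  finally show ?thesis .
qed

lemma sep_one: "separable p m one"
  unfolding separable_def using p1
  by (intro exI[of _ "\<lambda>i a. if i = 0 then 1 else 0"]) simp

lemma sep_spanI: "separable p m (\<lambda>y. \<Sum>j\<in>JJ. c j * vv j y)"
  unfolding separable_def by (intro exI[of _ "\<lambda>i a. c (i, a)"] ballI) (rule vv_sum)

lemma sep_scale: assumes "separable p m f" shows "separable p m (\<lambda>y. t * f y)"
proof -
  obtain \<xi> where "\<forall>x\<in>S. f x = (\<Sum>i<p. \<xi> i (x i))" using assms unfolding separable_def by blast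
  then show ?thesis unfolding separable_def
    by (intro exI[of _ "\<lambda>i a. t * \<xi> i a"]) (simp add: sum_distrib_left)
qed

lemma L2a:
  assumes eq: "rho_m p m P = rho_lb p m P"
  shows "\<exists>fs. \<forall>x\<in>S. P x 0 + P x 1 > 0 \<longrightarrow> P x 1 / (P x 0 + P x 1) = (\<Sum>i<p. fs i (x i))"
proof -
  obtain c where c: "\<forall>j\<in>JJ. ip S q (\<lambda>x. r x - (\<Sum>i\<in>JJ. c i * vv i x)) (vv j) = 0"
    using proj[where S=S and w=q and J=JJ and r=r and v=vv, OF qnn] by blast
  define s where "s = (\<lambda>x. \<Sum>i\<in>JJ. c i * vv i x)"
  define e where "e = (\<lambda>x. r x - s x)"
  have eperp: "\<And>f. separable p m f \<Longrightarrow> ip S q e f = 0"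
    using perp_sep c unfolding e_def s_def by blast
  have ssep: "separable p m s" unfolding s_def by (rule sep_spanI)
  have res: "r = (\<lambda>x. s x + e x)" unfolding e_def by auto
  have es: "ip S q e s = 0" using eperp[OF ssep] .
  have rr: "ip S q r r = ip S q s s + ip S q e e"
    unfolding res using es by (simp add: ip_add ip_sym[of S q _ "\<lambda>x. s x + e x"] ip_sym[of S q e s])
  show ?thesis
  proof (cases "ip S q e e = 0")
    case True
    have "\<forall>x\<in>S. q x * e x * e x = 0"
      using True unfolding ip_def
      by (subst (asm) sum_nonneg_eq_0_iff) (auto simp: finite_Xsp q_nn mult.assoc)
    then have ez: "e x = 0" if "x \<in> S" "q x > 0" for x
    proof -
      have "q x * e x * e x = 0" using \<open>\<forall>x\<in>S. q x * e x * e x = 0\<close> that(1) by blast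
      then show ?thesis using that(2) by simp
    qed
    show ?thesis
    proof (intro exI[of _ "\<lambda>i a. c (i, a) + (if i = 0 then pi else 0)"] ballI impI)
      fix x assume x: "x \<in> S" and qp: "P x 0 + P x 1 > 0"
      then have "q x > 0" unfolding q_def by simp
      then have "r x = s x" using ez[OF x] unfolding e_def by simp
      then have "P x 1 / q x = s x + pi" using \<open>q x > 0\<close> unfolding r_def by simp
      also have "\<dots> = (\<Sum>i<p. c (i, x i) + (if i = 0 then pi else 0))"
        using vv_sum[OF x] p1 unfolding s_def by (simp add: sum.distrib)
      finally show "P x 1 / (P x 0 + P x 1) = (\<Sum>i<p. c (i, x i) + (if i = 0 then pi else 0))"
        unfolding q_def .
    qed
  next
    case False
    then have epos: "ip S q e e > 0" using ip_nonneg[where S=S and w=q and a=e, OF qnn] by simp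
    have sge: "ip S q s s \<ge> 0" using ip_nonneg[where S=S and w=q and a=s, OF qnn] .
    define nr where "nr = sqrt (ip S q r r)"
    have nrpos: "nr > 0" unfolding nr_def rr using epos sge by simp
    define cn where "cn = 1 / nr"
    define f1 where "f1 = (\<lambda>x. cn * r x)"
    have f11: "ip S q f1 one = 0" unfolding f1_def by (simp add: ip_scale r_mean)
    have rrn: "ip S q r r = nr\<^sup>2" unfolding nr_def using rr epos sge by simp
    have sy: "ip S q r (\<lambda>x. cn * r x) = ip S q (\<lambda>x. cn * r x) r" by (rule ip_sym)
    have f1r: "ip S q f1 r = cn * nr\<^sup>2" unfolding f1_def by (simp only: ip_scale rrn)
    have f12: "ip S q f1 f1 = 1"
    proof -
      have "ip S q f1 f1 = cn * (cn * nr\<^sup>2)" unfolding f1_def by (simp only: ip_scale sy rrn)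
      then show ?thesis using nrpos unfolding cn_def by (simp add: power2_eq_square)
    qed
    have "kk * ip S q f1 r \<in> Full" using V2[OF f11 f12] unfolding Full_def
      by (intro CollectI exI[of _ f1] exI[of _ gs]) simp
    moreover have "kk * ip S q f1 r = kk * nr"
      using f1r nrpos unfolding cn_def by (simp add: power2_eq_square)
    ultimately have "kk * nr \<in> Full" by simp
    then have A: "kk * nr \<le> Sup Full" by (rule cSup_upper[OF _ bdd_Full])
    have "Full \<noteq> {}" using \<open>kk * ip S q f1 r \<in> Full\<close> by blast
    then have "Sep \<noteq> {}" by (rule Sep_ne)
    have "Sup Sep \<le> kk * sqrt (ip S q s s)"
    proof (rule cSup_least[OF \<open>Sep \<noteq> {}\<close>])
      fix w assume "w \<in> Sep"
      then obtain f g where w: "w = expect p m P (\<lambda>x y. f x * g y)" and fg: "hgr_feasible p m P f g"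
        and fsep: "separable p m f" unfolding Sep_def by blast
      have "ip S q f r = ip S q s f + ip S q e f"
        unfolding res by (simp add: ip_sym[of S q f] ip_add)
      then have fr: "ip S q f r = ip S q s f" using eperp[OF fsep] by simp
      have "\<bar>ip S q s f\<bar> \<le> sqrt (ip S q s s) * sqrt (ip S q f f)" by (rule ip_CS_abs[where S=S and w=q, OF qnn])
      then have "\<bar>ip S q f r\<bar> \<le> sqrt (ip S q s s)" using fr V1(3)[OF fg] by simp
      then show "w \<le> kk * sqrt (ip S q s s)"
        using V1(1)[OF fg] kk_pos w by (meson mult_left_mono less_imp_le order_trans)
    qed
    moreover have "sqrt (ip S q s s) < nr" unfolding nr_def rr using epos sge by simp
    ultimately have "Sup Sep < Sup Full" using A kk_pos
      by (meson mult_strict_left_mono order_le_less_trans order_less_le_trans)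
    then show ?thesis using eq unfolding rho_m_eq rho_lb_eq by simp
  qed
qed

lemma L2b:
  assumes fs: "\<forall>x\<in>S. P x 0 + P x 1 > 0 \<longrightarrow> P x 1 / (P x 0 + P x 1) = (\<Sum>i<p. fs i (x i))"
  shows "rho_m p m P = rho_lb p m P"
proof -
  define s0 where "s0 = (\<lambda>x. \<Sum>i<p. fs i (x i) - (if i = 0 then pi else 0))"
  have s0sep: "separable p m s0" unfolding separable_def s0_def
    by (intro exI[of _ "\<lambda>i a. fs i a - (if i = 0 then pi else 0)"]) simp
  have rs: "\<And>x. x \<in> S \<Longrightarrow> q x \<noteq> 0 \<Longrightarrow> r x = s0 x"
  proof -
    fix x assume x: "x \<in> S" and qn: "q x \<noteq> 0"
    then have "q x > 0" using q_nn[OF x] by simp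
    then have "P x 1 / q x = (\<Sum>i<p. fs i (x i))" using fs x unfolding q_def by auto
    have "s0 x = (\<Sum>i<p. fs i (x i)) - (\<Sum>i<p. if i = 0 then pi else 0)"
      unfolding s0_def by (rule sum_subtractf)
    also have "(\<Sum>i<p. if i = 0 then pi else 0) = pi" using p1 by simp
    finally have "s0 x = (\<Sum>i<p. fs i (x i)) - pi" .
    moreover have "r x = P x 1 / q x - pi" using qn unfolding r_def by simp
    ultimately show "r x = s0 x" using \<open>P x 1 / q x = (\<Sum>i<p. fs i (x i))\<close> by simp
  qed
  have ss: "ip S q s0 s0 = ip S q r r" by (rule ip_cong_w) (simp_all add: rs)
  have "ip S q s0 one = ip S q r one" by (rule ip_cong_w) (simp_all add: rs)
  then have s1: "ip S q s0 one = 0" using r_mean by simp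
  have sr: "ip S q s0 r = ip S q r r" by (rule ip_cong_w) (simp_all add: rs)
  have "Sup Full \<le> Sup Sep"
  proof (cases "Full = {}")
    case True
    then have "Sep = {}" using Sep_sub by blast
    then show ?thesis using True by simp
  next
    case False
    then have Sne: "Sep \<noteq> {}" by (rule Sep_ne)
    have "\<exists>w0\<in>Sep. w0 \<ge> kk * sqrt (ip S q r r)"
    proof (cases "ip S q r r = 0")
      case True
      obtain w where "w \<in> Sep" using Sne by blast
      then obtain f g where fg: "hgr_feasible p m P f g" and fsep: "separable p m f" unfolding Sep_def by blast
      have "kk * ip S q f r \<in> Sep"
        using V2[OF V1(2)[OF fg] V1(3)[OF fg]] fsep unfolding Sep_def
        by (intro CollectI exI[of _ f] exI[of _ gs]) simp
      moreover have "ip S q f r = 0" using ip_zero_left[where S=S and w=q and a=f and u=r, OF qnn True] .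
      ultimately show ?thesis using True by (intro bexI[of _ "kk * ip S q f r"]) simp_all
    next
      case False
      then have rp: "ip S q r r > 0" using ip_nonneg[where S=S and w=q and a=r, OF qnn] by simp
      define nr where "nr = sqrt (ip S q r r)"
      have nrpos: "nr > 0" unfolding nr_def using rp by simp
      have rrn: "ip S q r r = nr\<^sup>2" unfolding nr_def using rp by simp
      define cn where "cn = 1 / nr"
      define f1 where "f1 = (\<lambda>x. cn * s0 x)"
      have f11: "ip S q f1 one = 0" unfolding f1_def by (simp add: ip_scale s1)
      have sy: "ip S q s0 (\<lambda>x. cn * s0 x) = ip S q (\<lambda>x. cn * s0 x) s0" by (rule ip_sym)
      have f1r: "ip S q f1 r = cn * nr\<^sup>2" unfolding f1_def by (simp only: ip_scale sr rrn)
      have f12: "ip S q f1 f1 = 1"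
      proof -
        have "ip S q f1 f1 = cn * (cn * nr\<^sup>2)" unfolding f1_def by (simp only: ip_scale sy ss rrn)
        then show ?thesis using nrpos unfolding cn_def by (simp add: power2_eq_square)
      qed
      have f1sep: "separable p m f1" unfolding f1_def by (rule sep_scale[OF s0sep])
      have "kk * ip S q f1 r \<in> Sep" using V2[OF f11 f12] f1sep unfolding Sep_def
        by (intro CollectI exI[of _ f1] exI[of _ gs]) simp
      moreover have "kk * ip S q f1 r = kk * nr"
        using f1r nrpos unfolding cn_def by (simp add: power2_eq_square)
      ultimately have "kk * nr \<in> Sep" by simp
      then show ?thesis unfolding nr_def by (intro bexI[of _ "kk * sqrt (ip S q r r)"]) simp_all
    qed
    then obtain w0 where w0: "w0 \<in> Sep" "w0 \<ge> kk * sqrt (ip S q r r)" by blast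
    have "Sup Full \<le> w0"
    proof (rule cSup_least[OF False])
      fix v assume "v \<in> Full"
      then obtain f g where v: "v = expect p m P (\<lambda>x y. f x * g y)" and fg: "hgr_feasible p m P f g"
        unfolding Full_def by blast
      have "v \<le> kk * sqrt (ip S q r r)" unfolding v by (rule bound[OF fg])
      then show "v \<le> w0" using w0(2) by linarith
    qed
    also have "w0 \<le> Sup Sep" by (rule cSup_upper[OF w0(1) bdd_Sep])
    finally show ?thesis .
  qed
  then show ?thesis using L1 unfolding rho_m_eq rho_lb_eq by (rule antisym)
qed

end


lemma sel: "v \<in> A \<Longrightarrow> finite A \<Longrightarrow> (\<Sum>a\<in>A. c a * (if v = a then 1 else 0)) = (c v :: real)"
  by (simp add: if_distrib[of "\<lambda>t. c _ * t"] cong: if_cong)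

lemma ind1:
  assumes "P \<in> classC p m mu2 mu1" "Q \<in> classC p m mu2 mu1" "i < p" "a \<in> {1..m}" "y' \<in> {0,1}"
  shows "expect p m P (\<lambda>x y. if x i = a \<and> y = y' then 1 else 0) = expect p m Q (\<lambda>x y. if x i = a \<and> y = y' then 1 else 0)"
proof -
  have "expect p m P (\<lambda>x y. if x i = a \<and> y = y' then 1 else 0) = mu1 i a y'"
    using assms(1,3,4,5) unfolding classC_def by blast
  moreover have "expect p m Q (\<lambda>x y. if x i = a \<and> y = y' then 1 else 0) = mu1 i a y'"
    using assms(2,3,4,5) unfolding classC_def by blast
  ultimately show ?thesis by simp
qed

lemma ind2:
  assumes "P \<in> classC p m mu2 mu1" "Q \<in> classC p m mu2 mu1" "i < p" "j < p" "a \<in> {1..m}" "b \<in> {1..m}"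
  shows "expect p m P (\<lambda>x y. if x i = a \<and> x j = b then 1 else 0) = expect p m Q (\<lambda>x y. if x i = a \<and> x j = b then 1 else 0)"
proof -
  have "expect p m P (\<lambda>x y. if x i = a \<and> x j = b then 1 else 0) = mu2 i j a b"
    using assms(1,3-6) unfolding classC_def by blast
  moreover have "expect p m Q (\<lambda>x y. if x i = a \<and> x j = b then 1 else 0) = mu2 i j a b"
    using assms(2,3-6) unfolding classC_def by blast
  ultimately show ?thesis by simp
qed

lemma sepFG:
  assumes PQ: "P \<in> classC p m mu2 mu1" "Q \<in> classC p m mu2 mu1" and sf: "separable p m f"
  shows "expect p m P (\<lambda>x y. f x * g y) = expect p m Q (\<lambda>x y. f x * g y)"
proof -
  obtain \<xi> where \<xi>: "\<forall>x\<in>Xsp p m. f x = (\<Sum>i<p. \<xi> i (x i))" using sf unfolding separable_def by blast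
  have pw: "f x * g y = (\<Sum>i<p. \<Sum>a\<in>{1..m}. \<Sum>y'\<in>{0,1}. \<xi> i a * g y' * (if x i = a \<and> y = y' then 1 else 0))"
    if x: "x \<in> Xsp p m" and y: "y \<in> {0,1}" for x y
  proof -
    have "(\<Sum>y'\<in>{0,1}. \<xi> i a * g y' * (if x i = a \<and> y = y' then 1 else 0)) = \<xi> i a * (if x i = a then 1 else 0) * g y" for i a
      using y by auto
    then have "(\<Sum>i<p. \<Sum>a\<in>{1..m}. \<Sum>y'\<in>{0,1}. \<xi> i a * g y' * (if x i = a \<and> y = y' then 1 else 0))
        = (\<Sum>i<p. (\<Sum>a\<in>{1..m}. \<xi> i a * (if x i = a then 1 else 0)) * g y)"
      by (simp add: sum_distrib_right)
    also have "\<dots> = (\<Sum>i<p. \<xi> i (x i) * g y)"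
    proof (rule sum.cong[OF refl])
      fix i assume "i \<in> {..<p}"
      then have xi: "x i \<in> {1..m}" using Xsp_mem[OF x] by simp
      show "(\<Sum>a\<in>{1..m}. \<xi> i a * (if x i = a then 1 else 0)) * g y = \<xi> i (x i) * g y"
        using sel[OF xi, of "\<xi> i"] by simp
    qed
    also have "\<dots> = f x * g y" using \<xi> x by (simp add: sum_distrib_right)
    finally show ?thesis by simp
  qed
  have E: "expect p m R (\<lambda>x y. f x * g y) = (\<Sum>i<p. \<Sum>a\<in>{1..m}. \<Sum>y'\<in>{0,1}. \<xi> i a * g y' * expect p m R (\<lambda>x y. if x i = a \<and> y = y' then 1 else 0))" for R
  proof -
    have "expect p m R (\<lambda>x y. f x * g y) = expect p m R (\<lambda>x y. \<Sum>i<p. \<Sum>a\<in>{1..m}. \<Sum>y'\<in>{0,1}. \<xi> i a * g y' * (if x i = a \<and> y = y' then 1 else 0))"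
      by (rule expect_cong) (rule pw)
    also have "\<dots> = (\<Sum>i<p. \<Sum>a\<in>{1..m}. \<Sum>y'\<in>{0,1}. \<xi> i a * g y' * expect p m R (\<lambda>x y. if x i = a \<and> y = y' then 1 else 0))"
      by (simp only: expect_sum finite_lessThan finite_atLeastAtMost finite.emptyI finite_insert expect_scale)
    finally show ?thesis .
  qed
  show ?thesis unfolding E
    by (intro sum.cong refl) (auto simp: ind1[OF PQ])
qed

lemma sepF2:
  assumes PQ: "P \<in> classC p m mu2 mu1" "Q \<in> classC p m mu2 mu1" and sf: "separable p m f"
  shows "expect p m P (\<lambda>x y. (f x)\<^sup>2) = expect p m Q (\<lambda>x y. (f x)\<^sup>2)"
proof -
  obtain \<xi> where \<xi>: "\<forall>x\<in>Xsp p m. f x = (\<Sum>i<p. \<xi> i (x i))" using sf unfolding separable_def by blast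
  have pw: "(f x)\<^sup>2 = (\<Sum>i<p. \<Sum>j<p. \<Sum>a\<in>{1..m}. \<Sum>b\<in>{1..m}. \<xi> i a * \<xi> j b * (if x i = a \<and> x j = b then 1 else 0))"
    if x: "x \<in> Xsp p m" for x
  proof -
    have "(\<Sum>a\<in>{1..m}. \<Sum>b\<in>{1..m}. \<xi> i a * \<xi> j b * (if x i = a \<and> x j = b then 1 else 0))
       = (\<Sum>a\<in>{1..m}. \<xi> i a * (if x i = a then 1 else 0)) * (\<Sum>b\<in>{1..m}. \<xi> j b * (if x j = b then 1 else 0))"
      for i j by (simp add: sum_product) (intro sum.cong refl, auto)
    also have "\<dots> i j = \<xi> i (x i) * \<xi> j (x j)" if "i < p" "j < p" for i j
    proof -
      have xi: "x i \<in> {1..m}" "x j \<in> {1..m}" using Xsp_mem[OF x] that by auto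
      show ?thesis using sel[OF xi(1), of "\<xi> i"] sel[OF xi(2), of "\<xi> j"] by simp
    qed
    finally have "(\<Sum>i<p. \<Sum>j<p. \<Sum>a\<in>{1..m}. \<Sum>b\<in>{1..m}. \<xi> i a * \<xi> j b * (if x i = a \<and> x j = b then 1 else 0))
       = (\<Sum>i<p. \<Sum>j<p. \<xi> i (x i) * \<xi> j (x j))" by simp
    also have "\<dots> = (f x)\<^sup>2" using \<xi> x by (simp add: power2_eq_square sum_product)
    finally show ?thesis by simp
  qed
  have E: "expect p m R (\<lambda>x y. (f x)\<^sup>2) = (\<Sum>i<p. \<Sum>j<p. \<Sum>a\<in>{1..m}. \<Sum>b\<in>{1..m}. \<xi> i a * \<xi> j b * expect p m R (\<lambda>x y. if x i = a \<and> x j = b then 1 else 0))" for R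
  proof -
    have "expect p m R (\<lambda>x y. (f x)\<^sup>2) = expect p m R (\<lambda>x y. \<Sum>i<p. \<Sum>j<p. \<Sum>a\<in>{1..m}. \<Sum>b\<in>{1..m}. \<xi> i a * \<xi> j b * (if x i = a \<and> x j = b then 1 else 0))"
      by (rule expect_cong) (rule pw)
    also have "\<dots> = (\<Sum>i<p. \<Sum>j<p. \<Sum>a\<in>{1..m}. \<Sum>b\<in>{1..m}. \<xi> i a * \<xi> j b * expect p m R (\<lambda>x y. if x i = a \<and> x j = b then 1 else 0))"
      by (simp only: expect_sum finite_lessThan finite_atLeastAtMost expect_scale)
    finally show ?thesis .
  qed
  show ?thesis unfolding E
    by (intro sum.cong refl) (auto simp: ind2[OF PQ])
qed

lemma feas_eq:
  assumes PQ: "P \<in> classC p m mu2 mu1" "Q \<in> classC p m mu2 mu1" and sf: "separable p m f" and p1: "1 \<le> p"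
  shows "hgr_feasible p m P f g = hgr_feasible p m Q f g"
proof -
  have one: "separable p m (\<lambda>_. 1)"
    unfolding separable_def using p1
    by (intro exI[of _ "\<lambda>i a. if i = 0 then 1 else 0"]) simp
  have a: "expect p m R (\<lambda>x y. f x) = expect p m R (\<lambda>x y. f x * (\<lambda>_. 1) y)" for R by simp
  have b: "expect p m R (\<lambda>x y. g y) = expect p m R (\<lambda>x y. (\<lambda>_. 1) x * g y)" for R by simp
  have c: "expect p m R (\<lambda>x y. (g y)\<^sup>2) = expect p m R (\<lambda>x y. (\<lambda>_. 1) x * (\<lambda>y. (g y)\<^sup>2) y)" for R by simp
  show ?thesis unfolding hgr_feasible_def
    using sepFG[OF PQ sf, of "\<lambda>_. 1"] sepFG[OF PQ one, of g] sepFG[OF PQ one, of "\<lambda>y. (g y)\<^sup>2"] sepF2[OF PQ sf]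
    by (simp only: a b c)
qed

lemma L3:
  assumes PQ: "P \<in> classC p m mu2 mu1" "Q \<in> classC p m mu2 mu1" and p1: "1 \<le> p"
  shows "rho_lb p m P = rho_lb p m Q"
proof -
  have "{expect p m P (\<lambda>x y. f x * g y) | f g. hgr_feasible p m P f g \<and> separable p m f}
      = {expect p m Q (\<lambda>x y. f x * g y) | f g. hgr_feasible p m Q f g \<and> separable p m f}"
  proof (rule Collect_cong)
    fix v
    show "(\<exists>f g. v = expect p m P (\<lambda>x y. f x * g y) \<and> hgr_feasible p m P f g \<and> separable p m f) =
          (\<exists>f g. v = expect p m Q (\<lambda>x y. f x * g y) \<and> hgr_feasible p m Q f g \<and> separable p m f)"
    proof
      assume "\<exists>f g. v = expect p m P (\<lambda>x y. f x * g y) \<and> hgr_feasible p m P f g \<and> separable p m f"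
      then obtain f g where fg: "v = expect p m P (\<lambda>x y. f x * g y)" "hgr_feasible p m P f g" "separable p m f" by blast
      have "v = expect p m Q (\<lambda>x y. f x * g y)" using fg(1) sepFG[OF PQ fg(3)] by simp
      moreover have "hgr_feasible p m Q f g" using fg(2) feas_eq[OF PQ fg(3) p1] by simp
      ultimately show "\<exists>f g. v = expect p m Q (\<lambda>x y. f x * g y) \<and> hgr_feasible p m Q f g \<and> separable p m f"
        using fg(3) by blast
    next
      assume "\<exists>f g. v = expect p m Q (\<lambda>x y. f x * g y) \<and> hgr_feasible p m Q f g \<and> separable p m f"
      then obtain f g where fg: "v = expect p m Q (\<lambda>x y. f x * g y)" "hgr_feasible p m Q f g" "separable p m f" by blast
      have "v = expect p m P (\<lambda>x y. f x * g y)" using fg(1) sepFG[OF PQ fg(3)] by simp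
      moreover have "hgr_feasible p m P f g" using fg(2) feas_eq[OF PQ fg(3) p1] by simp
      ultimately show "\<exists>f g. v = expect p m P (\<lambda>x y. f x * g y) \<and> hgr_feasible p m P f g \<and> separable p m f"
        using fg(3) by blast
    qed
  qed
  then show ?thesis unfolding rho_lb_def by simp
qed

theorem theorem3:
  fixes p m :: nat
    and mu2 :: "nat \<Rightarrow> nat \<Rightarrow> nat \<Rightarrow> nat \<Rightarrow> real"
    and mu1 :: "nat \<Rightarrow> nat \<Rightarrow> nat \<Rightarrow> real"
  assumes "p \<ge> 1"
    and "classC p m mu2 mu1 \<noteq> {}"
    and "\<forall>P\<in>classC p m mu2 mu1.
           0 < expect p m P (\<lambda>x y. if y = 1 then 1 else 0) \<and>
           expect p m P (\<lambda>x y. if y = 1 then 1 else 0) < 1"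
  shows "(\<exists>P\<in>classC p m mu2 mu1.
            rho_m p m P = rho_lb_C p m mu2 mu1 \<and>
            (\<forall>Q\<in>classC p m mu2 mu1. rho_m p m P \<le> rho_m p m Q))
         \<longleftrightarrow>
         (\<exists>P\<in>classC p m mu2 mu1. \<exists>fs :: nat \<Rightarrow> nat \<Rightarrow> real.
            \<forall>x\<in>Xsp p m. P x 0 + P x 1 > 0 \<longrightarrow>
               P x 1 / (P x 0 + P x 1) = (\<Sum>i<p. fs i (x i)))"
proof -
  let ?C = "classC p m mu2 mu1"
  have pdC: "pd p m P" if "P \<in> ?C" for P
    using that assms(1,3) unfolding classC_def by unfold_locales auto
  define P0 where "P0 = (SOME P. P \<in> ?C)"
  have P0: "P0 \<in> ?C" unfolding P0_def using assms(2) by (simp add: some_in_eq)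
  have lbC: "rho_lb_C p m mu2 mu1 = rho_lb p m P0" unfolding rho_lb_C_def P0_def ..
  show ?thesis
  proof
    assume "\<exists>P\<in>?C. rho_m p m P = rho_lb_C p m mu2 mu1 \<and> (\<forall>Q\<in>?C. rho_m p m P \<le> rho_m p m Q)"
    then obtain P where P: "P \<in> ?C" "rho_m p m P = rho_lb_C p m mu2 mu1" by blast
    have "rho_m p m P = rho_lb p m P" using P lbC L3[OF P(1) P0 assms(1)] by simp
    then show "\<exists>P\<in>?C. \<exists>fs :: nat \<Rightarrow> nat \<Rightarrow> real. \<forall>x\<in>Xsp p m. P x 0 + P x 1 > 0 \<longrightarrow>
               P x 1 / (P x 0 + P x 1) = (\<Sum>i<p. fs i (x i))"
      using pd.L2a[OF pdC[OF P(1)]] P(1) by blast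
  next
    assume "\<exists>P\<in>?C. \<exists>fs :: nat \<Rightarrow> nat \<Rightarrow> real. \<forall>x\<in>Xsp p m. P x 0 + P x 1 > 0 \<longrightarrow>
               P x 1 / (P x 0 + P x 1) = (\<Sum>i<p. fs i (x i))"
    then obtain P fs where P: "P \<in> ?C" and fs: "\<forall>x\<in>Xsp p m. P x 0 + P x 1 > 0 \<longrightarrow>
               P x 1 / (P x 0 + P x 1) = (\<Sum>i<p. fs i (x i))" by blast
    have e: "rho_m p m P = rho_lb p m P" using pd.L2b[OF pdC[OF P] fs] .
    have "rho_m p m P = rho_lb_C p m mu2 mu1" using e lbC L3[OF P P0 assms(1)] by simp
    moreover have "\<forall>Q\<in>?C. rho_m p m P \<le> rho_m p m Q"
    proof
      fix Q assume Q: "Q \<in> ?C"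
      have "rho_m p m P = rho_lb p m Q" using e L3[OF P Q assms(1)] by simp
      also have "\<dots> \<le> rho_m p m Q" using pd.L1[OF pdC[OF Q]] .
      finally show "rho_m p m P \<le> rho_m p m Q" .
    qed
    ultimately show "\<exists>P\<in>?C. rho_m p m P = rho_lb_C p m mu2 mu1 \<and> (\<forall>Q\<in>?C. rho_m p m P \<le> rho_m p m Q)"
      using P by blast
  qed
qed

end
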